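(* For all positive integers $n,k$ with $k\le n$, \[ \overline{M}_k(n)=\sum_{d\mid n}\varphi(d)\sum_{\substack{\delta\mid n\\ \gcd(\delta,d)=1}}\mu(\delta)\sum_{\substack{1\le j\le n/\delta\\ \delta j\equiv 1 \ (\mathrm{mod}\ d)}} f_k\!\left(\left\lfloor \frac{n}{j\delta}\right\rfloor\right), \] where $d$ and $\delta$ run over the positive divisors of $n$, and for $d=1$ the congruence condition is vacuous.
   Context: For a nonempty finite set $A$ of positive integers, $(A)$ denotes the greatest common divisor of the elements of $A$. $\varphi$ is Euler's totient function and $\mu$ is the Möbius function. For $m,k\in\mathbb{N}$, $f_k(m)$ is the number of $k$-element subsets $A\subseteq\{1,2,\ldots,m\}$ with $(A)=1$ (so $f_k(m)=0$ if $m<k$; equivalently $f_k(m)=\sum_{d=1}^m\mu(d)\binom{\lfloor m/d\rfloor}{k}$). For $1\le k\le n$ define \[ \overline{M}_k(n)=\sum_{\substack{A\subseteq\{1,\ldots,n\},\ \#A=k\\ \gcd((A),n)=1}}\gcd((A)-1,n), \] the sum over all $k$-element subsets $A$ of $\{1,\ldots,n\}$ with $\gcd((A),n)=1$, with the convention $\gcd(0,n)=n$. *)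

theory Defs
  imports "HOL-Number_Theory.Number_Theory" "HOL-Computational_Algebra.Squarefree"
begin

definition moebius_mu :: "nat \<Rightarrow> int" where
  "moebius_mu d = (if squarefree d then (-1) ^ card (prime_factors d) else 0)"

definition fk :: "nat \<Rightarrow> nat \<Rightarrow> nat" where
  "fk k m = card {A. A \<subseteq> {1..m} \<and> card A = k \<and> Gcd A = 1}"

text \<open>Overline M_k(n): sum of gcd((A)-1, n) over k-subsets A of {1..n} with gcd((A),n)=1.
  Here gcd(0,n) = n automatically, matching the stated convention.\<close>
definition Mbar :: "nat \<Rightarrow> nat \<Rightarrow> nat" where
  "Mbar k n = (\<Sum>A \<in> {A. A \<subseteq> {1..n} \<and> card A = k \<and> coprime (Gcd A) n}. gcd (Gcd A - 1) n)"

end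

theory Submission
  imports Defs
begin

lemma mu_p_coprime:
  assumes p: "prime (p::nat)" and np: "\<not> p dvd e" and e: "e > 0"
  shows "moebius_mu (p*e) = - moebius_mu e"
proof -
  have cop: "coprime p e" using p np by (simp add: prime_imp_coprime)
  have sq: "squarefree (p*e) \<longleftrightarrow> squarefree e"
    using squarefree_multD(2)[of p e] squarefree_mult_coprime[OF cop squarefree_prime[OF p]] by blast
  have pf: "prime_factors (p*e) = insert p (prime_factors e)"
    using prime_factors_product[of p e] p e prime_prime_factors[OF p] by auto
  have "p \<notin> prime_factors e" using np by auto
  then have "card (prime_factors (p*e)) = Suc (card (prime_factors e))"
    using pf by simp
  then show ?thesis using sq unfolding moebius_mu_def by simp
qed

lemma mu_p_dvd:
  assumes p: "prime (p::nat)" and pd: "p dvd e"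
  shows "moebius_mu (p*e) = 0"
proof -
  have "p^2 dvd p*e" using pd by (simp add: power2_eq_square)
  then have "\<not> squarefree (p*e)" using p by (intro not_squarefreeI[of p]) auto
  then show ?thesis unfolding moebius_mu_def by simp
qed

lemma mu_sum:
  assumes m: "m > (1::nat)"
  shows "(\<Sum>\<delta> | \<delta> dvd m. moebius_mu \<delta>) = 0"
proof -
  obtain p where p: "prime p" "p dvd m" using prime_factor_nat[of m] m by auto
  define D0 where "D0 = {\<delta>. \<delta> dvd m \<and> \<not> p dvd \<delta>}"
  define D1 where "D1 = {\<delta>. \<delta> dvd m \<and> p dvd \<delta>}"
  obtain q where q: "m = p * q" using p by (auto elim: dvdE)
  have qpos: "q > 0" using q m by (cases q) auto
  have fin: "finite {\<delta>. \<delta> dvd q}" using qpos by simp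
  have finm: "finite {\<delta>. \<delta> dvd m}" using m by simp
  have split: "{\<delta>. \<delta> dvd m} = D0 \<union> D1" "D0 \<inter> D1 = {}" unfolding D0_def D1_def by auto
  have D1eq: "D1 = (\<lambda>e. p*e) ` {e. e dvd q}"
  proof
    show "D1 \<subseteq> (\<lambda>e. p*e) ` {e. e dvd q}"
    proof
      fix x assume "x \<in> D1"
      then have x1: "x dvd p*q" "p dvd x" unfolding D1_def using q by auto
      then obtain e where e: "x = p*e" by (auto elim: dvdE)
      with x1 have "p*e dvd p*q" by simp
      then have "e dvd q" using p by (simp add: prime_gt_0_nat)
      then show "x \<in> (\<lambda>e. p*e) ` {e. e dvd q}" using e by auto
    qed
    show "(\<lambda>e. p*e) ` {e. e dvd q} \<subseteq> D1" unfolding D1_def using q by auto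
  qed
  have inj: "inj_on (\<lambda>e. p*e) {e. e dvd q}" using p by (auto simp: inj_on_def prime_gt_0_nat)
  have "sum moebius_mu D1 = (\<Sum>e | e dvd q. moebius_mu (p*e))"
    unfolding D1eq by (simp add: sum.reindex[OF inj])
  also have "\<dots> = (\<Sum>e | e dvd q. if p dvd e then 0 else - moebius_mu e)"
  proof (rule sum.cong[OF refl])
    fix e assume "e \<in> {e. e dvd q}"
    then have "e > 0" using qpos by (auto intro: dvd_pos_nat)
    then show "moebius_mu (p*e) = (if p dvd e then 0 else - moebius_mu e)"
      using mu_p_dvd[OF p(1)] mu_p_coprime[OF p(1)] by auto
  qed
  also have "\<dots> = (\<Sum>e \<in> {e. e dvd q \<and> \<not> p dvd e}. - moebius_mu e)"
    by (rule sum.mono_neutral_cong_right) (use fin in auto)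
  also have "{e. e dvd q \<and> \<not> p dvd e} = D0"
  proof -
    have "e dvd q" if "e dvd m" "\<not> p dvd e" for e
    proof -
      have "coprime e p" using that p prime_imp_coprime[of p e] by (simp add: coprime_commute)
      then show ?thesis using that q by (metis coprime_dvd_mult_right_iff)
    qed
    then show ?thesis unfolding D0_def using q by auto
  qed
  finally have "sum moebius_mu D1 = - sum moebius_mu D0" by (simp add: sum_negf)
  moreover have "(\<Sum>\<delta> | \<delta> dvd m. moebius_mu \<delta>) = sum moebius_mu D0 + sum moebius_mu D1"
    unfolding split(1) using split(2) finm split(1) by (intro sum.union_disjoint) auto
  ultimately show ?thesis by simp
qed


lemma mu_coprime:
  assumes n: "n > (0::nat)"
  shows "(\<Sum>\<delta> | \<delta> dvd n \<and> \<delta> dvd g. moebius_mu \<delta>) = (if coprime g n then 1 else 0)"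
proof -
  have eq: "{\<delta>. \<delta> dvd n \<and> \<delta> dvd g} = {\<delta>. \<delta> dvd gcd g n}" by (auto simp: conj_commute)
  have gp: "gcd g n > 0" using n by simp
  show ?thesis
  proof (cases "coprime g n")
    case True
    then have g1: "gcd g n = 1" using coprime_iff_gcd_eq_1 by blast
    have h: "{\<delta>. \<delta> dvd gcd g n} = {1}" unfolding g1 by simp
    have s1: "{\<delta>. \<delta> dvd n \<and> \<delta> dvd g} = {1}" by (rule trans[OF eq h])
    have m1: "moebius_mu 1 = 1" by (simp add: moebius_mu_def)
    show ?thesis unfolding s1 using True m1 by simp
  next
    case False
    then have "gcd g n \<noteq> 1" using coprime_iff_gcd_eq_1 by blast
    then have gt: "gcd g n > 1" using gp by linarith
    have "(\<Sum>\<delta> | \<delta> dvd n \<and> \<delta> dvd g. moebius_mu \<delta>) = 0" unfolding eq by (rule mu_sum[OF gt])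
    then show ?thesis using False by simp
  qed
qed

lemma gcd_sum:
  assumes g: "g \<ge> (1::nat)" and n: "n > 0"
  shows "int (gcd (g - 1) n) = (\<Sum>d | d dvd n \<and> [g = 1] (mod d). int (totient d))"
proof -
  have eq: "{d. d dvd n \<and> [g = 1] (mod d)} = {d. d dvd gcd (g - 1) n}"
    using g by (simp add: cong_altdef_nat conj_commute)
  have "(\<Sum>d | d dvd gcd (g - 1) n. int (totient d)) = int (\<Sum>d | d dvd gcd (g - 1) n. totient d)"
    by (simp only: of_nat_sum)
  then show ?thesis unfolding eq totient_divisor_sum by simp
qed

lemma count_gcd:
  assumes g: "g > (0::nat)"
  shows "card {A. A \<subseteq> {1..n} \<and> card A = k \<and> Gcd A = g} = fk k (n div g)"
proof -
  define S where "S = {B. B \<subseteq> {1..n div g} \<and> card B = k \<and> Gcd B = 1}"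
  define T where "T = {A. A \<subseteq> {1..n} \<and> card A = k \<and> Gcd A = g}"
  have injg: "inj ((*) g)" using g by (auto simp: inj_def)
  have inj: "inj_on (image ((*) g)) S"
    using injg by (auto simp: inj_on_def inj_image_eq_iff)
  have img: "image ((*) g) ` S = T"
  proof
    show "image ((*) g) ` S \<subseteq> T"
    proof
      fix A assume "A \<in> image ((*) g) ` S"
      then obtain B where B: "B \<in> S" "A = (*) g ` B" by auto
      have "A \<subseteq> {1..n}"
      proof
        fix x assume "x \<in> A"
        then obtain b where b: "b \<in> B" "x = g*b" using B by auto
        then have "1 \<le> b" "b \<le> n div g" using B(1) unfolding S_def by auto
        then have "b * g \<le> n" using g by (simp add: less_eq_div_iff_mult_less_eq)
        then show "x \<in> {1..n}" using b \<open>1 \<le> b\<close> g by (auto simp: mult.commute)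
      qed
      moreover have "card A = k" using B injg unfolding S_def
        by (auto simp: card_image inj_on_subset)
      moreover have "Gcd A = g" using B Gcd_mult[of g B] unfolding S_def by simp
      ultimately show "A \<in> T" unfolding T_def by simp
    qed
    show "T \<subseteq> image ((*) g) ` S"
    proof
      fix A assume A: "A \<in> T"
      define B where "B = (\<lambda>x. x div g) ` A"
      have GA: "Gcd A = g" using A unfolding T_def by simp
      have dv: "g dvd a" if "a \<in> A" for a using Gcd_dvd[OF that] GA by simp
      have "(\<lambda>x. g * (x div g)) ` A = (\<lambda>x. x) ` A"
        by (rule image_cong[OF refl]) (use dv in simp)
      then have AB: "A = (*) g ` B" unfolding B_def image_image by simp
      have "B \<subseteq> {1..n div g}"
      proof
        fix b assume "b \<in> B"
        then obtain a where a: "a \<in> A" "b = a div g" unfolding B_def by auto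
        have a1: "1 \<le> a" "a \<le> n" using A a unfolding T_def by auto
        have ga: "g * b = a" using dv[OF a(1)] a by simp
        have "b \<noteq> 0" using ga a1 by auto
        then have "1 \<le> b" by simp
        moreover have "b * g \<le> n" using ga a1 by (simp add: mult.commute)
        ultimately show "b \<in> {1..n div g}" using g by (simp add: less_eq_div_iff_mult_less_eq)
      qed
      moreover have "card B = k"
      proof -
        have "card ((*) g ` B) = card B" by (rule card_image, rule inj_on_subset[OF injg]) simp
        then show ?thesis using A AB unfolding T_def by simp
      qed
      moreover have "Gcd B = 1" using A AB Gcd_mult[of g B] g unfolding T_def by simp
      ultimately show "A \<in> image ((*) g) ` S" using AB unfolding S_def by auto
    qed
  qed
  have "card T = card S" using card_image[OF inj] img by simp
  then show ?thesis unfolding T_def S_def fk_def by simp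
qed

lemma inner:
  fixes F :: "nat \<Rightarrow> int"
  assumes n: "n > 0"
  shows "(\<Sum>\<delta> | \<delta> dvd n \<and> coprime \<delta> d. moebius_mu \<delta> *
          (\<Sum>j | 1 \<le> j \<and> j \<le> n div \<delta> \<and> [\<delta> * j = 1] (mod d). F (j * \<delta>)))
       = (\<Sum>g \<in> {g \<in> {1..n}. [g = 1] (mod d)}. (if coprime g n then 1 else 0) * F g)"
proof -
  define E where "E = {g \<in> {1..n}. [g = 1] (mod d)}"
  have finE: "finite E" unfolding E_def by simp
  have finD: "finite {\<delta>. \<delta> dvd n}" using n by simp
  have reidx: "(\<Sum>j | 1 \<le> j \<and> j \<le> n div \<delta> \<and> [\<delta> * j = 1] (mod d). F (j * \<delta>))
      = (\<Sum>g \<in> {g. g \<in> E \<and> \<delta> dvd g}. F g)" if "\<delta> dvd n" for \<delta>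
  proof -
    have dp: "\<delta> > 0" using that n by (auto intro: dvd_pos_nat)
    define J where "J = {j. 1 \<le> j \<and> j \<le> n div \<delta> \<and> [\<delta> * j = 1] (mod d)}"
    have inj: "inj_on (\<lambda>j. \<delta> * j) J" using dp by (auto simp: inj_on_def)
    have img: "(\<lambda>j. \<delta> * j) ` J = {g. g \<in> E \<and> \<delta> dvd g}"
    proof
      show "(\<lambda>j. \<delta> * j) ` J \<subseteq> {g. g \<in> E \<and> \<delta> dvd g}"
      proof
        fix g assume "g \<in> (\<lambda>j. \<delta> * j) ` J"
        then obtain j where j: "j \<in> J" "g = \<delta> * j" by auto
        then have "j * \<delta> \<le> n" "1 \<le> j" "[\<delta> * j = 1] (mod d)" using dp unfolding J_def
          by (auto simp: less_eq_div_iff_mult_less_eq)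
        then show "g \<in> {g. g \<in> E \<and> \<delta> dvd g}" using j dp unfolding E_def
          by (auto simp: mult.commute)
      qed
      show "{g. g \<in> E \<and> \<delta> dvd g} \<subseteq> (\<lambda>j. \<delta> * j) ` J"
      proof
        fix g assume g: "g \<in> {g. g \<in> E \<and> \<delta> dvd g}"
        then obtain j where j: "g = \<delta> * j" by (auto elim: dvdE)
        have "1 \<le> g" "g \<le> n" "[g = 1] (mod d)" using g unfolding E_def by auto
        then have "j \<noteq> 0" "j * \<delta> \<le> n" "[\<delta> * j = 1] (mod d)" using j by (auto simp: mult.commute)
        then have "j \<in> J" unfolding J_def using dp by (simp add: less_eq_div_iff_mult_less_eq)
        then show "g \<in> (\<lambda>j. \<delta> * j) ` J" using j by auto
      qed
    qed
    have "(\<Sum>g \<in> {g. g \<in> E \<and> \<delta> dvd g}. F g) = (\<Sum>j\<in>J. F (\<delta> * j))"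
      unfolding img[symmetric] by (simp add: sum.reindex[OF inj])
    then show ?thesis unfolding J_def by (simp add: mult.commute)
  qed
  have "(\<Sum>\<delta> | \<delta> dvd n \<and> coprime \<delta> d. moebius_mu \<delta> *
          (\<Sum>j | 1 \<le> j \<and> j \<le> n div \<delta> \<and> [\<delta> * j = 1] (mod d). F (j * \<delta>)))
      = (\<Sum>\<delta> | \<delta> dvd n \<and> coprime \<delta> d. moebius_mu \<delta> * (\<Sum>g \<in> {g. g \<in> E \<and> \<delta> dvd g}. F g))"
    by (rule sum.cong[OF refl], subst reidx) auto
  also have "\<dots> = (\<Sum>\<delta> \<in> {\<delta>. \<delta> dvd n}. moebius_mu \<delta> * (\<Sum>g \<in> {g. g \<in> E \<and> \<delta> dvd g}. F g))"
  proof (rule sum.mono_neutral_left)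
    show "finite {\<delta>. \<delta> dvd n}" by (rule finD)
    show "{\<delta>. \<delta> dvd n \<and> coprime \<delta> d} \<subseteq> {\<delta>. \<delta> dvd n}" by auto
    show "\<forall>i\<in>{\<delta>. \<delta> dvd n} - {\<delta>. \<delta> dvd n \<and> coprime \<delta> d}.
            moebius_mu i * (\<Sum>g \<in> {g. g \<in> E \<and> i dvd g}. F g) = 0"
    proof
      fix i assume i: "i \<in> {\<delta>. \<delta> dvd n} - {\<delta>. \<delta> dvd n \<and> coprime \<delta> d}"
      have "{g. g \<in> E \<and> i dvd g} = {}"
      proof (rule ccontr)
        assume "{g. g \<in> E \<and> i dvd g} \<noteq> {}"
        then obtain g where g: "[g = 1] (mod d)" "i dvd g" unfolding E_def by auto
        have "coprime 1 d" by simp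
        then have "coprime g d" using cong_imp_coprime[OF cong_sym[OF g(1)]] by simp
        moreover obtain t where "g = i * t" using g(2) by (auto elim: dvdE)
        ultimately have "coprime i d" by simp
        then show False using i by simp
      qed
      then show "moebius_mu i * (\<Sum>g \<in> {g. g \<in> E \<and> i dvd g}. F g) = 0" by (simp only: sum.empty mult_zero_right)
    qed
  qed
  also have "\<dots> = (\<Sum>\<delta> \<in> {\<delta>. \<delta> dvd n}. (\<Sum>g \<in> {g. g \<in> E \<and> \<delta> dvd g}. moebius_mu \<delta> * F g))"
    by (simp add: sum_distrib_left)
  also have "\<dots> = (\<Sum>g \<in> E. (\<Sum>\<delta> \<in> {\<delta>. \<delta> \<in> {\<delta>. \<delta> dvd n} \<and> \<delta> dvd g}. moebius_mu \<delta> * F g))"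
    by (rule sum.swap_restrict[OF finD finE])
  also have "\<dots> = (\<Sum>g \<in> E. (if coprime g n then 1 else 0) * F g)"
  proof (rule sum.cong[OF refl])
    fix g
    have "(\<Sum>\<delta> \<in> {\<delta>. \<delta> \<in> {\<delta>. \<delta> dvd n} \<and> \<delta> dvd g}. moebius_mu \<delta> * F g)
        = (\<Sum>\<delta> | \<delta> dvd n \<and> \<delta> dvd g. moebius_mu \<delta>) * F g"
      by (simp add: sum_distrib_right)
    then show "(\<Sum>\<delta> \<in> {\<delta>. \<delta> \<in> {\<delta>. \<delta> dvd n} \<and> \<delta> dvd g}. moebius_mu \<delta> * F g)
        = (if coprime g n then 1 else 0) * F g" using mu_coprime[OF n, of g] by simp
  qed
  finally show ?thesis unfolding E_def .
qed

theorem mainTheorem2: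
  fixes n k :: nat
  assumes "1 \<le> k" and "k \<le> n"
  shows "int (Mbar k n) =
    (\<Sum>d | d dvd n. int (totient d) *
       (\<Sum>\<delta> | \<delta> dvd n \<and> coprime \<delta> d. moebius_mu \<delta> *
          (\<Sum>j | 1 \<le> j \<and> j \<le> n div \<delta> \<and> [\<delta> * j = 1] (mod d).
               int (fk k (n div (j * \<delta>))))))"
proof -
  have n: "n > 0" using assms by simp
  define F where "F g = int (fk k (n div g))" for g
  define c where "c g = (if coprime g n then 1 else 0 :: int)" for g
  define S where "S = {A. A \<subseteq> {1..n} \<and> card A = k \<and> coprime (Gcd A) n}"
  have finS: "finite S" unfolding S_def
    by (rule finite_subset[of _ "Pow {1..n}"]) auto
  have GS: "Gcd ` S \<subseteq> {1..n}"
  proof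
    fix x assume "x \<in> Gcd ` S"
    then obtain A where A: "A \<in> S" "x = Gcd A" by auto
    have "A \<noteq> {}" using A assms unfolding S_def by auto
    then obtain a where a: "a \<in> A" by auto
    have a1: "1 \<le> a" "a \<le> n" using a A unfolding S_def by auto
    have "Gcd A dvd a" using a by (rule Gcd_dvd)
    then have "Gcd A \<le> a" "Gcd A \<noteq> 0" using a1 a by (auto intro: dvd_imp_le)
    then show "x \<in> {1..n}" using a1 unfolding A(2) atLeastAtMost_iff by linarith
  qed
  have step1: "int (Mbar k n) = (\<Sum>g\<in>{1..n}. c g * int (gcd (g - 1) n) * F g)"
  proof -
    have "Mbar k n = (\<Sum>g\<in>{1..n}. \<Sum>A\<in>{A. A \<in> S \<and> Gcd A = g}. gcd (Gcd A - 1) n)"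
      unfolding Mbar_def S_def[symmetric] by (rule sum.group[OF finS _ GS, symmetric]) simp
    also have "\<dots> = (\<Sum>g\<in>{1..n}. (if coprime g n then fk k (n div g) else 0) * gcd (g - 1) n)"
    proof (rule sum.cong[OF refl])
      fix g assume g: "g \<in> {1..n}"
      have "(\<Sum>A\<in>{A. A \<in> S \<and> Gcd A = g}. gcd (Gcd A - 1) n) = card {A. A \<in> S \<and> Gcd A = g} * gcd (g - 1) n"
        by simp
      moreover have "card {A. A \<in> S \<and> Gcd A = g} = (if coprime g n then fk k (n div g) else 0)"
      proof (cases "coprime g n")
        case True
        then have "{A. A \<in> S \<and> Gcd A = g} = {A. A \<subseteq> {1..n} \<and> card A = k \<and> Gcd A = g}"
          unfolding S_def by auto
        then show ?thesis using True count_gcd[of g n k] g by simp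
      next
        case False
        then have e: "{A. A \<in> S \<and> Gcd A = g} = {}" unfolding S_def by auto
        show ?thesis using False by (simp only: e card.empty if_False)
      qed
      ultimately show "(\<Sum>A\<in>{A. A \<in> S \<and> Gcd A = g}. gcd (Gcd A - 1) n) = (if coprime g n then fk k (n div g) else 0) * gcd (g - 1) n"
        by simp
    qed
    finally show ?thesis unfolding c_def F_def by (auto simp: of_nat_sum intro!: sum.cong)
  qed
  have finD: "finite {d. d dvd n}" using n by simp
  have "(\<Sum>d | d dvd n. int (totient d) *
       (\<Sum>\<delta> | \<delta> dvd n \<and> coprime \<delta> d. moebius_mu \<delta> *
          (\<Sum>j | 1 \<le> j \<and> j \<le> n div \<delta> \<and> [\<delta> * j = 1] (mod d).
               int (fk k (n div (j * \<delta>))))))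
      = (\<Sum>d \<in> {d. d dvd n}. int (totient d) * (\<Sum>g \<in> {g. g \<in> {1..n} \<and> [g = 1] (mod d)}. c g * F g))"
  proof (rule sum.cong[OF refl])
    fix d
    show "int (totient d) *
       (\<Sum>\<delta> | \<delta> dvd n \<and> coprime \<delta> d. moebius_mu \<delta> *
          (\<Sum>j | 1 \<le> j \<and> j \<le> n div \<delta> \<and> [\<delta> * j = 1] (mod d).
               int (fk k (n div (j * \<delta>))))) =
      int (totient d) * (\<Sum>g \<in> {g. g \<in> {1..n} \<and> [g = 1] (mod d)}. c g * F g)"
      using inner[OF n, where F=F and d=d] unfolding c_def F_def by simp
  qed
  also have "\<dots> = (\<Sum>d \<in> {d. d dvd n}. (\<Sum>g \<in> {g. g \<in> {1..n} \<and> [g = 1] (mod d)}. int (totient d) * (c g * F g)))"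
    by (simp add: sum_distrib_left)
  also have "\<dots> = (\<Sum>g \<in> {1..n}. (\<Sum>d \<in> {d. d \<in> {d. d dvd n} \<and> [g = 1] (mod d)}. int (totient d) * (c g * F g)))"
    by (rule sum.swap_restrict[OF finD]) simp
  also have "\<dots> = (\<Sum>g\<in>{1..n}. c g * int (gcd (g - 1) n) * F g)"
  proof (rule sum.cong[OF refl])
    fix g assume g: "g \<in> {1..n}"
    have "(\<Sum>d \<in> {d. d \<in> {d. d dvd n} \<and> [g = 1] (mod d)}. int (totient d) * (c g * F g))
       = (\<Sum>d | d dvd n \<and> [g = 1] (mod d). int (totient d)) * (c g * F g)"
      by (simp add: sum_distrib_right)
    also have "\<dots> = int (gcd (g - 1) n) * (c g * F g)" using gcd_sum[of g n] g n by simp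
    finally show "(\<Sum>d \<in> {d. d \<in> {d. d dvd n} \<and> [g = 1] (mod d)}. int (totient d) * (c g * F g))
       = c g * int (gcd (g - 1) n) * F g" by simp
  qed
  finally show ?thesis using step1 by simp
qed

end
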